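(* Let $K$ be an imaginary quadratic field, let $f\ge1$, and let $A=\mathbb{C}/\mathcal{O}_f\times\mathbb{C}/\mathfrak{a}$, where $\mathfrak{a}\subset K$ is a lattice whose conductor divides $f$. If $F\subset A$ is an elliptic curve, then the conductor of $F$ divides $f$.
   Context: $\mathcal{O}_m=\mathbb{Z}+m\mathcal{O}_K$. A lattice in $K$ is a free abelian subgroup of rank 2; its conductor is the $m$ with $\{\alpha\in K:\alpha\mathfrak{a}\subset\mathfrak{a}\}=\mathcal{O}_m$. An elliptic curve $F\subset A$ has CM by $K$, so $F\cong\mathbb{C}/\mathfrak{b}$ for a lattice $\mathfrak{b}\subset K$, and its conductor is that of $\mathfrak{b}$. *)

theory Defs
  imports "HOL-Analysis.Analysis" "HOL-Computational_Algebra.Polynomial"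
    "HOL-Computational_Algebra.Squarefree"
begin

definition imag_quad_field :: "int \<Rightarrow> complex set" where
  "imag_quad_field d = {of_rat a + of_rat b * (\<i> * complex_of_real (sqrt (real_of_int d))) | a b. True}"

definition alg_integer :: "complex \<Rightarrow> bool" where
  "alg_integer x \<longleftrightarrow> (\<exists>p :: int poly. lead_coeff p = 1 \<and> poly (map_poly of_int p) x = 0)"

definition ring_of_integers :: "complex set \<Rightarrow> complex set" where
  "ring_of_integers K = {x \<in> K. alg_integer x}"

definition order_of_conductor :: "complex set \<Rightarrow> nat \<Rightarrow> complex set" where
  "order_of_conductor K m = {of_int n + of_nat m * x | n x. x \<in> ring_of_integers K}"

definition lattice_in :: "complex set \<Rightarrow> complex set \<Rightarrow> bool" where
  "lattice_in K L \<longleftrightarrow> (\<exists>w1 w2. w1 \<in> K \<and> w2 \<in> K \<and>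
      (\<forall>m n :: int. of_int m * w1 + of_int n * w2 = 0 \<longrightarrow> m = 0 \<and> n = 0) \<and>
      L = {of_int m * w1 + of_int n * w2 | m n :: int. True})"

definition has_conductor :: "complex set \<Rightarrow> complex set \<Rightarrow> nat \<Rightarrow> bool" where
  "has_conductor K L m \<longleftrightarrow> m \<ge> 1 \<and> {\<alpha> \<in> K. \<forall>x \<in> L. \<alpha> * x \<in> L} = order_of_conductor K m"

text \<open>Lattice of C^2 underlying A = C/O_f x C/a.\<close>
definition prod_lattice :: "complex set \<Rightarrow> complex set \<Rightarrow> (complex \<times> complex) set" where
  "prod_lattice L1 L2 = L1 \<times> L2"

text \<open>An elliptic curve F in the complex torus C^2/Lam is the image of a complex line
  W = C v (v nonzero) such that W \<inter> Lam spans W over R (so W/(W \<inter> Lam) is compact).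
  Then F is isomorphic to C/b with b = {z. z v \<in> Lam}.\<close>
definition line_lattice :: "(complex \<times> complex) set \<Rightarrow> complex \<times> complex \<Rightarrow> complex set" where
  "line_lattice Lam v = {z. (z * fst v, z * snd v) \<in> Lam}"

definition elliptic_subtorus :: "(complex \<times> complex) set \<Rightarrow> complex \<times> complex \<Rightarrow> bool" where
  "elliptic_subtorus Lam v \<longleftrightarrow> v \<noteq> (0, 0) \<and>
     (\<exists>z1 \<in> line_lattice Lam v. \<exists>z2 \<in> line_lattice Lam v. Im (z2 * cnj z1) \<noteq> 0)"

end

theory Submission
  imports Defs
begin


definition subgrp :: "'a::ab_group_add set \<Rightarrow> bool" where
  "subgrp H \<longleftrightarrow> 0 \<in> H \<and> (\<forall>x\<in>H. \<forall>y\<in>H. x - y \<in> H)"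

lemma subgrp_0: "subgrp H \<Longrightarrow> 0 \<in> H" by (simp add: subgrp_def)
lemma subgrp_diff: "subgrp H \<Longrightarrow> x \<in> H \<Longrightarrow> y \<in> H \<Longrightarrow> x - y \<in> H" by (simp add: subgrp_def)
lemma subgrp_uminus: "subgrp H \<Longrightarrow> x \<in> H \<Longrightarrow> - x \<in> H"
  using subgrp_diff[of H 0 x] subgrp_0[of H] by simp
lemma subgrp_add: "subgrp H \<Longrightarrow> x \<in> H \<Longrightarrow> y \<in> H \<Longrightarrow> x + y \<in> H"
  using subgrp_diff[of H x "-y"] subgrp_uminus[of H y] by simp

lemma subgrp_intmult:
  fixes H :: "'a::ring_1 set"
  assumes "subgrp H" "x \<in> H" shows "of_int k * x \<in> H"
proof (induction k rule: int_induct[where k=0])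
  case base then show ?case using subgrp_0[OF assms(1)] by simp
next
  case (step1 i)
  have "of_int (i+1) * x = of_int i * x + x" by (simp add: algebra_simps)
  then show ?case using subgrp_add[OF assms(1) step1(2) assms(2)] by simp
next
  case (step2 i)
  have "of_int (i-1) * x = of_int i * x - x" by (simp add: algebra_simps)
  then show ?case using subgrp_diff[OF assms(1) step2(2) assms(2)] by simp
qed

lemma int_subgroup:
  fixes S :: "int set"
  assumes "subgrp S"
  shows "\<exists>g\<ge>0. S = {k * g | k. True}"
proof (cases "\<exists>x\<in>S. x > 0")
  case False
  have "S = {0}"
  proof safe
    fix x assume "x \<in> S"
    have "\<not> x > 0" "\<not> -x > 0" using False \<open>x \<in> S\<close> subgrp_uminus[OF assms \<open>x \<in> S\<close>] by auto
    then show "x = 0" by linarith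
  qed (use subgrp_0[OF assms] in auto)
  then show ?thesis by (intro exI[of _ 0]) auto
next
  case True
  define n where "n = (LEAST n::nat. int n \<in> S \<and> n > 0)"
  define g where "g = int n"
  obtain x0 where x0: "x0 \<in> S" "x0 > 0" using True by auto
  have "int n \<in> S \<and> n > 0" unfolding n_def
    by (rule LeastI[of _ "nat x0"]) (use x0 in auto)
  then have g: "g \<in> S \<and> g > 0" unfolding g_def by auto
  have gmin: "y \<ge> g" if "y \<in> S" "y > 0" for y
  proof -
    have "n \<le> nat y" unfolding n_def by (rule Least_le) (use that in auto)
    then show ?thesis using that unfolding g_def by linarith
  qed
  have mult: "k * g \<in> S" for k
    using subgrp_intmult[OF assms g[THEN conjunct1], of k] by simp
  have "S = {k * g | k. True}"
  proof (intro set_eqI iffI)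
    fix x assume x: "x \<in> S"
    have "x mod g = x - (x div g) * g" by (simp add: minus_div_mult_eq_mod)
    also have "\<dots> \<in> S" by (rule subgrp_diff[OF assms x mult])
    finally have r: "x mod g \<in> S" .
    have "x mod g = 0"
    proof (rule ccontr)
      assume "x mod g \<noteq> 0"
      then have "x mod g > 0" using g by (simp add: order_le_neq_trans)
      then have "x mod g \<ge> g" using gmin r by auto
      moreover have "x mod g < g" using g by simp
      ultimately show False by simp
    qed
    then have "x = (x div g) * g" by (metis div_mult_mod_eq add_0_right)
    then show "x \<in> {k * g |k. True}" by blast
  qed (use mult in auto)
  then show ?thesis using g by (intro exI[of _ g]) auto
qed



definition th :: "int \<Rightarrow> complex" where
  "th d = \<i> * complex_of_real (sqrt (real_of_int d))"

definition Lat :: "int \<Rightarrow> int \<Rightarrow> complex set" where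
  "Lat d D = {(of_int m + of_int n * th d) / of_int D | m n. True}"

lemma Re_th[simp]: "Re (th d) = 0" by (simp add: th_def)
lemma Im_th[simp]: "Im (th d) = sqrt (real_of_int d)" by (simp add: th_def)

lemma th_sq: "d \<ge> 0 \<Longrightarrow> th d * th d = - of_int d"
proof -
  assume "d \<ge> 0"
  have "sqrt (real_of_int d) * sqrt (real_of_int d) = real_of_int d" using \<open>d \<ge> 0\<close> by simp
  then have "complex_of_real (sqrt (real_of_int d)) * complex_of_real (sqrt (real_of_int d)) = of_int d"
    by (simp flip: of_real_mult)
  then show ?thesis unfolding th_def
    by (simp add: algebra_simps)
qed

lemma cor: "(of_rat a :: complex) = of_real (of_rat a)" by (cases a) (simp add: of_rat_rat)
lemma Re_of_rat[simp]: "Re (of_rat a) = of_rat a" by (simp add: cor)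
lemma Im_of_rat[simp]: "Im (of_rat a) = 0" by (simp add: cor)

lemma K_iff: "z \<in> imag_quad_field d \<longleftrightarrow> (\<exists>a b. z = of_rat a + of_rat b * th d)"
  by (auto simp: imag_quad_field_def th_def)

lemma K_coords_unique:
  assumes "d > 0" "of_rat a + of_rat b * th d = of_rat a' + of_rat b' * th d"
  shows "a = a' \<and> b = b'"
proof -
  have "Re (of_rat a + of_rat b * th d) = Re (of_rat a' + of_rat b' * th d)"
       "Im (of_rat a + of_rat b * th d) = Im (of_rat a' + of_rat b' * th d)" using assms(2) by auto
  moreover have "sqrt (real_of_int d) > 0" using assms(1) by simp
  ultimately show ?thesis
    by simp
qed

context fixes d :: int assumes dpos: "d > 0"
begin

abbreviation "KK \<equiv> imag_quad_field d"

lemma K_add: "x \<in> KK \<Longrightarrow> y \<in> KK \<Longrightarrow> x + y \<in> KK"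
proof -
  assume "x \<in> KK" "y \<in> KK"
  then obtain a b a' b' where x: "x = of_rat a + of_rat b * th d" and y: "y = of_rat a' + of_rat b' * th d"
    unfolding K_iff by auto
  have "x + y = of_rat (a + a') + of_rat (b + b') * th d"
    unfolding x y by (simp add: algebra_simps of_rat_add)
  then show ?thesis unfolding K_iff by blast
qed

lemma K_diff: "x \<in> KK \<Longrightarrow> y \<in> KK \<Longrightarrow> x - y \<in> KK"
proof -
  assume "x \<in> KK" "y \<in> KK"
  then obtain a b a' b' where x: "x = of_rat a + of_rat b * th d" and y: "y = of_rat a' + of_rat b' * th d"
    unfolding K_iff by auto
  have "x - y = of_rat (a - a') + of_rat (b - b') * th d"
    unfolding x y by (simp add: algebra_simps of_rat_diff)
  then show ?thesis unfolding K_iff by blast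
qed

lemma K_mult: "x \<in> KK \<Longrightarrow> y \<in> KK \<Longrightarrow> x * y \<in> KK"
proof -
  assume "x \<in> KK" "y \<in> KK"
  then obtain a b a' b' where x: "x = of_rat a + of_rat b * th d" and y: "y = of_rat a' + of_rat b' * th d"
    unfolding K_iff by auto
  have "x * y = of_rat a * of_rat a' + of_rat b * of_rat b' * (th d * th d) + (of_rat a * of_rat b' + of_rat b * of_rat a') * th d"
    unfolding x y by (simp add: algebra_simps)
  also have "\<dots> = of_rat (a * a' - of_int d * b * b') + of_rat (a * b' + b * a') * th d"
    using dpos by (simp add: th_sq of_rat_add of_rat_mult of_rat_diff algebra_simps)
  finally show ?thesis unfolding K_iff by blast
qed

lemma K_of_int: "of_int n \<in> KK"
  unfolding K_iff by (intro exI[of _ "of_int n"] exI[of _ 0]) simp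

lemma K_th: "th d \<in> KK"
  unfolding K_iff by (intro exI[of _ 0] exI[of _ 1]) simp

lemma K_subgrp: "subgrp KK"
  unfolding subgrp_def using K_diff K_of_int[of 0] by auto

lemma Lat_sub_K: "D \<noteq> 0 \<Longrightarrow> Lat d D \<subseteq> KK"
proof
  fix z assume "D \<noteq> 0" "z \<in> Lat d D"
  then obtain m n where z: "z = (of_int m + of_int n * th d) / of_int D" unfolding Lat_def by auto
  have "z = of_rat (of_int m / of_int D) + of_rat (of_int n / of_int D) * th d"
    unfolding z using \<open>D \<noteq> 0\<close> by (simp add: of_rat_divide field_simps)
  then show "z \<in> KK" unfolding K_iff by blast
qed

lemma Lat_iff: "z \<in> Lat d D \<longleftrightarrow> (\<exists>m n. z = (of_int m + of_int n * th d) / of_int D)"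
  unfolding Lat_def by auto

lemma Lat_subgrp: "subgrp (Lat d D)"
  unfolding subgrp_def
proof (intro conjI ballI)
  show "0 \<in> Lat d D" unfolding Lat_iff by (intro exI[of _ 0]) simp
  fix x y assume "x \<in> Lat d D" "y \<in> Lat d D"
  then obtain m n m' n' where x: "x = (of_int m + of_int n * th d) / of_int D"
    and y: "y = (of_int m' + of_int n' * th d) / of_int D" unfolding Lat_iff by auto
  have "x - y = (of_int (m - m') + of_int (n - n') * th d) / of_int D"
    unfolding x y by (simp add: diff_divide_distrib[symmetric] algebra_simps)
  then show "x - y \<in> Lat d D" unfolding Lat_iff by blast
qed

lemma Lat_mult: "z \<in> Lat d D \<Longrightarrow> E \<noteq> 0 \<Longrightarrow> z \<in> Lat d (D * E)"
proof -
  assume "z \<in> Lat d D" "E \<noteq> 0"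
  then obtain m n where z: "z = (of_int m + of_int n * th d) / of_int D" unfolding Lat_iff by auto
  have "(of_int (m * E) + of_int (n * E) * th d) / of_int (D * E)
     = (of_int E * (of_int m + of_int n * th d)) / (of_int E * of_int D)" by (simp add: algebra_simps)
  also have "\<dots> = z" unfolding z using \<open>E \<noteq> 0\<close> by (intro nonzero_mult_divide_mult_cancel_left) simp
  finally have "z = (of_int (m * E) + of_int (n * E) * th d) / of_int (D * E)" ..
  then show ?thesis unfolding Lat_iff by blast
qed

lemma Lat_coords_unique:
  assumes "D \<noteq> 0" "(of_int m + of_int n * th d) / of_int D = (of_int m' + of_int n' * th d) / of_int D"
  shows "m = m' \<and> n = n'"
proof -
  have "of_int m + of_int n * th d = of_int m' + of_int n' * th d" using assms by simp
  then have "Re (of_int m + of_int n * th d) = Re (of_int m' + of_int n' * th d)"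
     "Im (of_int m + of_int n * th d) = Im (of_int m' + of_int n' * th d)" by auto
  moreover have "sqrt (real_of_int d) > 0" using dpos by simp
  ultimately show ?thesis by simp
qed

lemma K_in_Lat: "z \<in> KK \<Longrightarrow> \<exists>D>0. z \<in> Lat d D"
proof -
  assume "z \<in> KK"
  then obtain a b where z: "z = of_rat a + of_rat b * th d" unfolding K_iff by auto
  obtain p q where a: "a = Fract p q" "q > 0" by (cases a) auto
  obtain r s where b: "b = Fract r s" "s > 0" by (cases b) auto
  have "z = (of_int (p * s) + of_int (r * q) * th d) / of_int (q * s)"
    unfolding z a b using a(2) b(2) by (simp add: of_rat_rat field_simps)
  moreover have "q * s > 0" using a(2) b(2) by simp
  ultimately show ?thesis unfolding Lat_iff by blast
qed

end



lemma Im_comb: "Im ((of_int a * u + of_int b * v) * cnj (of_int c * u + of_int e * v)) = of_int (c*b - a*e) * Im (v * cnj u)"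
  by (simp add: algebra_simps)

context fixes d :: int assumes dpos: "d > 0"
begin

lemma lattice_sub:
  assumes H: "subgrp H" and HL: "H \<subseteq> Lat d D" and D: "D > 0" and h: "h1 \<in> H" "h2 \<in> H" "Im (h2 * cnj h1) \<noteq> 0"
  shows "lattice_in (imag_quad_field d) H"
proof -
  define u1 where "u1 = 1 / (of_int D :: complex)"
  define u2 where "u2 = th d / of_int D"
  have eq: "(of_int m + of_int n * th d) / of_int D = of_int m * u1 + of_int n * u2" for m n
    unfolding u1_def u2_def by (simp add: add_divide_distrib)
  have rep: "\<exists>m n. z = of_int m * u1 + of_int n * u2" if "z \<in> H" for z
  proof -
    have "z \<in> Lat d D" using HL that by auto
    then obtain m n where "z = (of_int m + of_int n * th d) / of_int D" unfolding Lat_iff[OF dpos] by auto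
    then show ?thesis unfolding eq by blast
  qed
  have uniq: "m = m' \<and> n = n'" if "of_int m * u1 + of_int n * u2 = of_int m' * u1 + of_int n' * u2" for m n m' n'
    using Lat_coords_unique[OF dpos, of D m n m' n'] that D unfolding eq by simp
  have lin: "of_int m * u1 + of_int n * u2 - (of_int m' * u1 + of_int n' * u2) = of_int (m-m') * u1 + of_int (n-n') * u2" for m n m' n'
    by (simp add: algebra_simps)
  define S1 where "S1 = {m. of_int m * u1 \<in> H}"
  define S2 where "S2 = {n. \<exists>m. of_int m * u1 + of_int n * u2 \<in> H}"
  have "subgrp S1" unfolding subgrp_def S1_def
  proof (intro conjI ballI; simp)
    show "0 \<in> H" using subgrp_0[OF H] .
    fix x y assume "of_int x * u1 \<in> H" "of_int y * u1 \<in> H"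
    from subgrp_diff[OF H this] show "(of_int x - of_int y) * u1 \<in> H" by (simp add: algebra_simps)
  qed
  have "subgrp S2" unfolding subgrp_def S2_def
  proof (intro conjI ballI; simp)
    show "\<exists>m. of_int m * u1 \<in> H" using subgrp_0[OF H] by (intro exI[of _ 0]) simp
    fix x y assume "\<exists>m. of_int m * u1 + of_int x * u2 \<in> H" "\<exists>m. of_int m * u1 + of_int y * u2 \<in> H"
    then obtain m m' where "of_int m * u1 + of_int x * u2 \<in> H" "of_int m' * u1 + of_int y * u2 \<in> H" by blast
    from subgrp_diff[OF H this] show "\<exists>m. of_int m * u1 + (of_int x - of_int y) * u2 \<in> H"
      unfolding lin by (intro exI[of _ "m - m'"]) simp
  qed
  obtain g1 where g1: "g1 \<ge> 0" "S1 = {k * g1 |k. True}" using int_subgroup[OF \<open>subgrp S1\<close>] by blast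
  obtain g2 where g2: "g2 \<ge> 0" "S2 = {k * g2 |k. True}" using int_subgroup[OF \<open>subgrp S2\<close>] by blast
  obtain m1 n1 where h1: "h1 = of_int m1 * u1 + of_int n1 * u2" using rep h(1) by blast
  obtain m2 n2 where h2: "h2 = of_int m2 * u1 + of_int n2 * u2" using rep h(2) by blast
  have n12: "n1 \<in> S2" "n2 \<in> S2" unfolding S2_def using h h1 h2 by auto
  have Imf: "Im (h2 * cnj h1) = of_int (m1 * n2 - m2 * n1) * Im (u2 * cnj u1)"
    unfolding h1 h2 by (rule Im_comb)
  have "g2 \<noteq> 0"
  proof
    assume "g2 = 0"
    then have "n1 = 0" "n2 = 0" using n12 g2(2) by auto
    then show False using Imf h(3) by simp
  qed
  have "g1 \<noteq> 0"
  proof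
    assume "g1 = 0"
    have "of_int n2 * h1 - of_int n1 * h2 \<in> H"
      by (intro subgrp_diff[OF H] subgrp_intmult[OF H] h)
    moreover have "of_int n2 * h1 - of_int n1 * h2 = of_int (n2 * m1 - n1 * m2) * u1"
      unfolding h1 h2 by (simp add: algebra_simps)
    ultimately have "n2 * m1 - n1 * m2 \<in> S1" unfolding S1_def by simp
    then have "n2 * m1 - n1 * m2 = 0" using g1(2) \<open>g1 = 0\<close> by auto
    then show False using Imf h(3) by (simp add: algebra_simps)
  qed
  have "g2 \<in> S2" using g2(2) by force
  then obtain ms where hs: "of_int ms * u1 + of_int g2 * u2 \<in> H" unfolding S2_def by blast
  have "g1 \<in> S1" using g1(2) by force
  then have e1: "of_int g1 * u1 \<in> H" unfolding S1_def by blast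
  define w1 where "w1 = of_int g1 * u1"
  define w2 where "w2 = of_int ms * u1 + of_int g2 * u2"
  have HK: "H \<subseteq> imag_quad_field d" using HL Lat_sub_K[OF dpos, of D] D by auto
  show ?thesis unfolding lattice_in_def
  proof (rule exI[of _ w1], rule exI[of _ w2], intro conjI)
    show "w1 \<in> imag_quad_field d" using HK e1 unfolding w1_def by auto
    show "w2 \<in> imag_quad_field d" using HK hs unfolding w2_def by auto
  next
    show "\<forall>j k :: int. of_int j * w1 + of_int k * w2 = 0 \<longrightarrow> j = 0 \<and> k = 0"
    proof (intro allI impI)
    fix j k :: int assume "of_int j * w1 + of_int k * w2 = 0"
    then have "of_int (j * g1 + k * ms) * u1 + of_int (k * g2) * u2 = of_int 0 * u1 + of_int 0 * u2"
      unfolding w1_def w2_def by (simp add: algebra_simps)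
    from uniq[OF this] show "j = 0 \<and> k = 0" using \<open>g1 \<noteq> 0\<close> \<open>g2 \<noteq> 0\<close> by auto
    qed
  next
    show "H = {of_int m * w1 + of_int n * w2 |m n. True}"
    proof (intro set_eqI iffI)
      fix z assume "z \<in> H"
      then obtain m n where z: "z = of_int m * u1 + of_int n * u2" using rep by blast
      have "n \<in> S2" unfolding S2_def using \<open>z \<in> H\<close> z by auto
      then obtain k where k: "n = k * g2" using g2(2) by auto
      have "z - of_int k * w2 \<in> H" using subgrp_diff[OF H \<open>z \<in> H\<close> subgrp_intmult[OF H hs]] unfolding w2_def .
      moreover have "z - of_int k * w2 = of_int (m - k * ms) * u1" unfolding z w2_def k by (simp add: algebra_simps)
      ultimately have "m - k * ms \<in> S1" unfolding S1_def by simp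
      then obtain j where j: "m - k * ms = j * g1" using g1(2) by auto
      have "z = of_int j * w1 + of_int k * w2" unfolding z w1_def w2_def k
        using arg_cong[OF j, of "\<lambda>x. of_int x * u1 :: complex"] by (simp add: algebra_simps)
      then show "z \<in> {of_int m * w1 + of_int n * w2 |m n. True}" by blast
    next
      fix z assume "z \<in> {of_int m * w1 + of_int n * w2 |m n. True}"
      then obtain m n where "z = of_int m * w1 + of_int n * w2" by blast
      then show "z \<in> H" using e1 hs unfolding w1_def[symmetric] w2_def[symmetric]
        by (metis H subgrp_add subgrp_intmult)
    qed
  qed
qed

end

lemma CH:
  assumes "lattice_in K L" "\<forall>x\<in>L. \<alpha> * x \<in> L"
  shows "\<exists>T N :: int. \<alpha> * \<alpha> = of_int T * \<alpha> - of_int N"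
proof -
  obtain w1 w2 where w: "\<forall>m n :: int. of_int m * w1 + of_int n * w2 = 0 \<longrightarrow> m = 0 \<and> n = 0"
    "L = {of_int m * w1 + of_int n * w2 | m n :: int. True}"
    using assms(1) unfolding lattice_in_def by blast
  have "w1 = of_int (1::int) * w1 + of_int (0::int) * w2" by simp
  then have "w1 \<in> L" using w(2) by blast
  have "w2 = of_int (0::int) * w1 + of_int (1::int) * w2" by simp
  then have "w2 \<in> L" using w(2) by blast
  have "w1 \<noteq> 0"
  proof
    assume "w1 = 0"
    then have "of_int (1::int) * w1 + of_int (0::int) * w2 = 0" by simp
    with w(1) have "(1::int) = 0" by blast
    then show False by simp
  qed
  obtain a b where ab: "\<alpha> * w1 = of_int a * w1 + of_int b * w2" using assms(2) \<open>w1 \<in> L\<close> w(2) by blast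
  obtain c e where ce: "\<alpha> * w2 = of_int c * w1 + of_int e * w2" using assms(2) \<open>w2 \<in> L\<close> w(2) by blast
  have "((\<alpha> - of_int a) * (\<alpha> - of_int e) - of_int b * of_int c) * w1
      = (\<alpha> - of_int e) * ((\<alpha> * w1) - of_int a * w1) - of_int b * of_int c * w1" by (simp add: algebra_simps)
  also have "\<dots> = of_int b * ((\<alpha> * w2) - of_int e * w2 - of_int c * w1)" unfolding ab by (simp add: algebra_simps)
  also have "\<dots> = 0" unfolding ce by simp
  finally have "(\<alpha> - of_int a) * (\<alpha> - of_int e) - of_int b * of_int c = 0" using \<open>w1 \<noteq> 0\<close> by simp
  then have "\<alpha> * \<alpha> = of_int (a + e) * \<alpha> - of_int (a * e - b * c)" by (simp add: algebra_simps)
  then show ?thesis by blast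
qed



lemma sqf_rat:
  fixes d :: int and C :: rat and M :: int
  assumes "squarefree d" "of_int d * C * C = of_int M"
  shows "\<exists>c. C = of_int c"
proof -
  obtain p q where C: "C = Fract p q" "q > 0" "coprime p q" by (cases C) auto
  have "of_int d * (of_int p / of_int q) * (of_int p / of_int q) = (of_int M :: rat)"
    using assms(2) C by (simp add: Fract_of_int_quotient)
  then have "of_int (d * p * p) = (of_int (M * q * q) :: rat)" using C(2) by (simp add: field_simps)
  then have eq: "d * p * p = M * q * q" by linarith
  have "q ^ 2 dvd d * p ^ 2" by (metis eq dvd_triv_right mult.assoc power2_eq_square)
  moreover have "coprime (q ^ 2) (p ^ 2)" using C(3) by (simp add: coprime_commute)
  ultimately have "q ^ 2 dvd d" using coprime_dvd_mult_left_iff by blast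
  then have "q dvd 1" using assms(1) unfolding squarefree_def by blast
  then have "q = 1" using C(2) by simp
  then show ?thesis using C(1) by (intro exI[of _ p]) (simp add: Fract_of_int_quotient)
qed

lemma nt4:
  fixes d T c N :: int
  assumes "squarefree d" "T^2 + d * c^2 = 4 * N"
  shows "(d mod 4 = 3 \<longrightarrow> (even T \<longleftrightarrow> even c)) \<and> (d mod 4 \<noteq> 3 \<longrightarrow> even T \<and> even c)"
proof -
  have "d mod 4 \<noteq> 0"
  proof
    assume "d mod 4 = 0"
    then have "(2::int)^2 dvd d" by (simp add: mod_eq_0_iff_dvd)
    then have "(2::int) dvd 1" using assms(1) unfolding squarefree_def by blast
    then show False by simp
  qed
  define x where "x = T mod 4"
  define y where "y = c mod 4"
  define r where "r = d mod 4"
  have d1: "4 dvd (T - x)" "4 dvd (c - y)" "4 dvd (d - r)" unfolding x_def y_def r_def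
    by (simp_all add: minus_mod_eq_mult_div)
  have "T^2 + d * c^2 - (x^2 + r * y^2) = (T - x) * (T + x) + d * ((c - y) * (c + y)) + (d - r) * y^2"
    by (simp add: algebra_simps power2_eq_square)
  also have "4 dvd \<dots>" using d1 by (intro dvd_add dvd_mult2 dvd_mult) auto
  finally have a: "4 dvd (T^2 + d * c^2 - (x^2 + r * y^2))" .
  have "x^2 + r * y^2 = 4 * N - (T^2 + d * c^2 - (x^2 + r * y^2))" using assms(2) by simp
  then have "4 dvd (x^2 + r * y^2)" using a by (metis dvd_diff dvd_triv_left)
  then have key: "(x^2 + r * y^2) mod 4 = 0" by simp
  have ex: "even T \<longleftrightarrow> even x" "even c \<longleftrightarrow> even y" unfolding x_def y_def
    by (simp_all add: even_iff_mod_2_eq_zero mod_mod_cancel)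
  have "0 \<le> x" "x < 4" "0 \<le> y" "y < 4" "0 \<le> r" "r < 4" unfolding x_def y_def r_def by simp_all
  then have "x = 0 \<or> x = 1 \<or> x = 2 \<or> x = 3" "y = 0 \<or> y = 1 \<or> y = 2 \<or> y = 3" "r = 1 \<or> r = 2 \<or> r = 3"
    using \<open>d mod 4 \<noteq> 0\<close> unfolding r_def by linarith+
  then have "(r = 3 \<longrightarrow> (even x \<longleftrightarrow> even y)) \<and> (r \<noteq> 3 \<longrightarrow> even x \<and> even y)"
    using key by (elim disjE) (simp_all add: power2_eq_square)
  then show ?thesis using ex unfolding r_def by simp
qed

lemma map_poly_of_int_add: "map_poly (of_int :: int \<Rightarrow> 'a::ring_1) (p + q) = map_poly of_int p + map_poly of_int q"
  by (intro poly_eqI) (simp add: coeff_map_poly)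

lemma map_poly_of_int_diff: "map_poly (of_int :: int \<Rightarrow> 'a::ring_1) (p - q) = map_poly of_int p - map_poly of_int q"
  by (intro poly_eqI) (simp add: coeff_map_poly)

lemma map_poly_of_int_mult: "map_poly (of_int :: int \<Rightarrow> 'a::comm_ring_1) (p * q) = map_poly of_int p * map_poly of_int q"
  by (intro poly_eqI) (simp add: coeff_map_poly coeff_mult)

lemma poly_of_int_sum:
  assumes "r = 0 \<or> degree r < n"
  shows "poly (map_poly (of_int :: int \<Rightarrow> complex) r) x = (\<Sum>i<n. of_int (coeff r i) * x ^ i)"
proof -
  have "poly (map_poly (of_int :: int \<Rightarrow> complex) r) x = (\<Sum>i\<le>degree r. of_int (coeff r i) * x ^ i)"
    by (simp add: poly_altdef coeff_map_poly degree_map_poly)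
  also have "\<dots> = (\<Sum>i<n. of_int (coeff r i) * x ^ i)"
  proof (cases "r = 0")
    case True then show ?thesis by simp
  next
    case False
    then have "degree r < n" using assms by simp
    then show ?thesis
      by (intro sum.mono_neutral_left) (auto simp: coeff_eq_0)
  qed
  finally show ?thesis .
qed



definition om :: "int \<Rightarrow> complex" where
  "om d = (if d mod 4 = 3 then (1 + th d) / 2 else th d)"

lemma subgrp_sum:
  assumes "subgrp H" "finite A" "\<And>i. i \<in> A \<Longrightarrow> f i \<in> H"
  shows "sum f A \<in> H"
  using assms(2,3)
proof (induction A rule: finite_induct)
  case empty then show ?case using subgrp_0[OF assms(1)] by simp
next
  case (insert a A) then show ?case using subgrp_add[OF assms(1)] by simp
qed

lemma quad_poly_zero:
  fixes w :: complex
  assumes "w * w = of_int t * w + of_int u"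
  shows "poly (map_poly of_int [:n*n + k*n*t - k*k*u, -(2*n + k*t), 1:]) (of_int n + of_int k * w) = 0"
proof -
  have "poly (map_poly of_int [:n*n + k*n*t - k*k*u, -(2*n + k*t), 1:]) (of_int n + of_int k * w)
     = of_int k * of_int k * (w * w - of_int t * w - of_int u)"
    by (simp add: map_poly_pCons algebra_simps)
  also have "\<dots> = 0" using assms by simp
  finally show ?thesis .
qed

context fixes d :: int assumes dpos: "d > 0" and sqf: "squarefree d"
begin

lemma om_K: "om d \<in> imag_quad_field d"
proof (cases "d mod 4 = 3")
  case True
  have "om d = of_rat (1/2) + of_rat (1/2) * th d" using True by (simp add: om_def of_rat_divide add_divide_distrib)
  then show ?thesis unfolding K_iff by blast
next
  case False then show ?thesis using K_th[OF dpos] by (simp add: om_def)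
qed

lemma om_Lat2: "om d \<in> Lat d 2"
proof (cases "d mod 4 = 3")
  case True
  have "om d = (of_int 1 + of_int 1 * th d) / of_int 2" using True by (simp add: om_def)
  then show ?thesis unfolding Lat_iff[OF dpos] by blast
next
  case False
  have "om d = (of_int 0 + of_int 2 * th d) / of_int 2" using False by (simp add: om_def)
  then show ?thesis unfolding Lat_iff[OF dpos] by blast
qed

lemma Im_om: "Im (om d) \<noteq> 0"
  using dpos by (simp add: om_def)

lemma om_sq: "\<exists>t u :: int. om d * om d = of_int t * om d + of_int u"
proof (cases "d mod 4 = 3")
  case True
  then have "4 dvd (d + 1)" by presburger
  then obtain q where q: "d + 1 = 4 * q" by blast
  then have "d = 4 * q - 1" by simp
  then have d': "(of_int d :: complex) = 4 * of_int q - 1" by simp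
  have "om d * om d = (1 + th d) * (1 + th d) / 4" using True by (simp add: om_def)
  also have "\<dots> = (1 + 2 * th d + th d * th d) / 4" by (simp add: algebra_simps)
  also have "\<dots> = (1 + 2 * th d - of_int d) / 4" using dpos by (simp add: th_sq)
  also have "\<dots> = (1 + th d) / 2 - of_int q" unfolding d' by (simp add: field_simps)
  also have "\<dots> = of_int 1 * om d + of_int (- q)" using True by (simp add: om_def)
  finally show ?thesis by blast
next
  case False
  then have "om d * om d = of_int 0 * om d + of_int (- d)" using dpos by (simp add: om_def th_sq)
  then show ?thesis by blast
qed

lemma quadK:
  assumes "\<alpha> \<in> imag_quad_field d" "\<alpha> * \<alpha> = of_int T * \<alpha> - of_int N"
  shows "\<exists>n k :: int. \<alpha> = of_int n + of_int k * om d"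
proof -
  obtain a b where ab: "\<alpha> = of_rat a + of_rat b * th d" using assms(1) unfolding K_iff by blast
  have "\<alpha> * \<alpha> = of_rat a * of_rat a + of_rat b * of_rat b * (th d * th d) + 2 * of_rat a * of_rat b * th d"
    unfolding ab by (simp add: algebra_simps)
  also have "\<dots> = of_rat (a * a - of_int d * b * b) + of_rat (2 * a * b) * th d"
    using dpos by (simp add: th_sq of_rat_add of_rat_mult of_rat_diff)
  finally have l: "\<alpha> * \<alpha> = of_rat (a * a - of_int d * b * b) + of_rat (2 * a * b) * th d" .
  have r: "of_int T * \<alpha> - of_int N = of_rat (of_int T * a - of_int N) + of_rat (of_int T * b) * th d"
    unfolding ab by (simp add: of_rat_mult of_rat_diff algebra_simps)
  from K_coords_unique[OF dpos, of "a * a - of_int d * b * b" "2 * a * b" "of_int T * a - of_int N" "of_int T * b"]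
  have e: "a * a - of_int d * b * b = of_int T * a - of_int N" "2 * a * b = of_int T * b"
    using assms(2) l r by auto
  show ?thesis
  proof (cases "b = 0")
    case True
    then have "\<alpha> = of_rat a" using ab by simp
    then have "\<alpha> \<in> \<rat>" by simp
    moreover have "algebraic_int \<alpha>"
    proof
      show "lead_coeff [:of_int N, - of_int T, 1 :: complex:] = 1" by simp
      show "\<forall>i. coeff [:of_int N, - of_int T, 1 :: complex:] i \<in> \<int>"
        by (auto simp: coeff_pCons split: nat.splits)
      show "poly [:of_int N, - of_int T, 1 :: complex:] \<alpha> = 0" using assms(2) by (simp add: algebra_simps)
    qed
    ultimately have "\<alpha> \<in> \<int>" by (intro rational_algebraic_int_is_int)
    then obtain n where "\<alpha> = of_int n" by (auto elim: Ints_cases)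
    then show ?thesis by (intro exI[of _ n] exI[of _ 0]) simp
  next
    case False
    then have Ta: "of_int T = 2 * a" using e(2) by (metis mult.commute mult_right_cancel)
    have Nab: "of_int N = a * a + of_int d * b * b" using e(1) Ta by (simp add: algebra_simps)
    have "of_int d * (2 * b) * (2 * b) = (of_int (4 * N - T * T) :: rat)"
      using Nab Ta by (simp add: algebra_simps)
    from sqf_rat[OF sqf this] obtain c where c: "2 * b = of_int c" by blast
    have "of_int (T^2 + d * c^2) = (of_int (4 * N) :: rat)"
      using Nab Ta c[symmetric] by (simp add: algebra_simps power2_eq_square)
    then have tc: "T^2 + d * c^2 = 4 * N" by linarith
    have a2: "of_rat a = (of_int T / 2 :: complex)"
    proof -
      have "(of_rat (a * 2) :: complex) = of_rat (of_int T)" using Ta by (simp add: mult.commute)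
      then have "of_rat a * 2 = (of_int T :: complex)" by (simp add: of_rat_mult)
      then show ?thesis by (simp add: field_simps)
    qed
    have b2: "of_rat b = (of_int c / 2 :: complex)"
    proof -
      have "(of_rat (b * 2) :: complex) = of_rat (of_int c)" using c by (simp add: mult.commute)
      then have "of_rat b * 2 = (of_int c :: complex)" by (simp add: of_rat_mult)
      then show ?thesis by (simp add: field_simps)
    qed
    have al: "\<alpha> = of_int T / 2 + of_int c / 2 * th d" using ab a2 b2 by simp
    note par = nt4[OF sqf tc]
    show ?thesis
    proof (cases "d mod 4 = 3")
      case True
      then have "even (T - c)" using par by simp
      then obtain n where n: "T - c = 2 * n" by blast
      have "T = 2 * n + c" using n by simp
      then have "\<alpha> = of_int n + of_int c * om d" unfolding al using True
        by (simp add: om_def field_simps)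
      then show ?thesis by blast
    next
      case False
      then have "even T" "even c" using par by simp_all
      then obtain n k where "T = 2 * n" "c = 2 * k" by (auto elim!: evenE)
      then have "\<alpha> = of_int n + of_int k * om d" unfolding al using False
        by (simp add: om_def field_simps)
      then show ?thesis by blast
    qed
  qed
qed

lemma K_power: "x \<in> imag_quad_field d \<Longrightarrow> x ^ i \<in> imag_quad_field d"
proof (induction i)
  case 0 then show ?case using K_of_int[OF dpos, of 1] by simp
next
  case (Suc i) then show ?case using K_mult[OF dpos] by simp
qed

lemma om_alg: "of_int n + of_int k * om d \<in> ring_of_integers (imag_quad_field d)"
proof -
  obtain t u where tu: "om d * om d = of_int t * om d + of_int u" using om_sq by blast
  have "of_int n + of_int k * om d \<in> imag_quad_field d"
    using K_add[OF dpos] K_mult[OF dpos] K_of_int[OF dpos] om_K by blast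
  moreover have "alg_integer (of_int n + of_int k * om d)"
    unfolding alg_integer_def
    by (intro exI[of _ "[:n*n + k*n*t - k*k*u, -(2*n + k*t), 1:]"] conjI quad_poly_zero[OF tu]) simp
  ultimately show ?thesis unfolding ring_of_integers_def by blast
qed

lemma OK_iff: "x \<in> ring_of_integers (imag_quad_field d) \<longleftrightarrow> (\<exists>n k :: int. x = of_int n + of_int k * om d)"
proof
  assume "\<exists>n k :: int. x = of_int n + of_int k * om d"
  then show "x \<in> ring_of_integers (imag_quad_field d)" using om_alg by blast
next
  assume xO: "x \<in> ring_of_integers (imag_quad_field d)"
  then have xK: "x \<in> imag_quad_field d" and "alg_integer x" unfolding ring_of_integers_def by auto
  then obtain p where p: "lead_coeff p = 1" "poly (map_poly of_int p) x = 0" unfolding alg_integer_def by blast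
  obtain a b where ab: "x = of_rat a + of_rat b * th d" using xK unfolding K_iff by blast
  show "\<exists>n k :: int. x = of_int n + of_int k * om d"
  proof (cases "b = 0")
    case True
    then have "x \<in> \<rat>" using ab by simp
    moreover have "algebraic_int x" unfolding algebraic_int_altdef_ipoly using p by blast
    ultimately have "x \<in> \<int>" by (intro rational_algebraic_int_is_int)
    then obtain n where "x = of_int n" by (auto elim: Ints_cases)
    then show ?thesis by (intro exI[of _ n] exI[of _ 0]) simp
  next
    case False
    define n where "n = degree p"
    define ev where "ev q = poly (map_poly (of_int :: int \<Rightarrow> complex) q) x" for q
    define M where "M = range ev"
    have evd: "ev q - ev q' = ev (q - q')" for q q' unfolding ev_def by (simp add: map_poly_of_int_diff)
    have "subgrp M" unfolding subgrp_def M_def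
    proof (intro conjI ballI)
      show "0 \<in> range ev" by (rule range_eqI[of _ _ 0]) (simp add: ev_def)
      fix y z assume "y \<in> range ev" "z \<in> range ev"
      then show "y - z \<in> range ev" using evd by auto
    qed
    have multM: "\<forall>y\<in>M. x * y \<in> M"
    proof
      fix y assume "y \<in> M"
      then obtain q where "y = ev q" unfolding M_def by blast
      then have "x * y = ev (pCons 0 q)" unfolding ev_def by (simp add: map_poly_pCons)
      then show "x * y \<in> M" unfolding M_def by blast
    qed
    have "1 = ev 1" unfolding ev_def by simp
    then have oneM: "1 \<in> M" unfolding M_def by blast
    have "x = ev [:0, 1:]" unfolding ev_def by (simp add: map_poly_pCons)
    then have xM: "x \<in> M" unfolding M_def by blast
    have "p \<noteq> 0" using p(1) by auto
    have red: "\<exists>r. (r = 0 \<or> degree r < n) \<and> ev q = ev r" for q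
    proof -
      obtain s r where sr: "pseudo_divmod q p = (s, r)" by (cases "pseudo_divmod q p") auto
      from pseudo_divmod[OF \<open>p \<noteq> 0\<close> sr] p(1)
      have "q = p * s + r" "r = 0 \<or> degree r < n" unfolding n_def by auto
      then have "ev q = ev r" unfolding ev_def using p(2)
        by (simp add: map_poly_of_int_add map_poly_of_int_mult)
      then show ?thesis using \<open>r = 0 \<or> degree r < n\<close> by blast
    qed
    have "\<forall>i. \<exists>D>0. x ^ i \<in> Lat d D" using K_in_Lat[OF dpos K_power[OF xK]] by blast
    then obtain Df where Df: "\<And>i. Df i > 0 \<and> x ^ i \<in> Lat d (Df i)" by metis
    define D where "D = (\<Prod>i<n. Df i)"
    have Dpos: "D > 0" unfolding D_def using Df by (intro prod_pos) auto
    have xiD: "x ^ i \<in> Lat d D" if "i < n" for i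
    proof -
      have "D = Df i * (\<Prod>j\<in>{..<n} - {i}. Df j)" unfolding D_def using that
        by (simp add: prod.remove)
      moreover have "(\<Prod>j\<in>{..<n} - {i}. Df j) \<noteq> 0" using Df by (simp add: prod_pos less_imp_neq[symmetric])
      ultimately show ?thesis using Lat_mult[OF dpos] Df by metis
    qed
    have MLat: "M \<subseteq> Lat d D"
    proof
      fix y assume "y \<in> M"
      then obtain q where "y = ev q" unfolding M_def by blast
      then obtain r where r: "r = 0 \<or> degree r < n" "y = ev r" using red by blast
      then have "y = (\<Sum>i<n. of_int (coeff r i) * x ^ i)" unfolding ev_def by (simp add: poly_of_int_sum)
      also have "\<dots> \<in> Lat d D"
        by (intro subgrp_sum[OF Lat_subgrp[OF dpos]] subgrp_intmult[OF Lat_subgrp[OF dpos]] xiD) auto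
      finally show "y \<in> Lat d D" .
    qed
    have "Im (x * cnj 1) \<noteq> 0" using False dpos ab by simp
    from lattice_sub[OF dpos \<open>subgrp M\<close> MLat Dpos oneM xM this]
    have "lattice_in (imag_quad_field d) M" .
    from CH[OF this multM] obtain T N where "x * x = of_int T * x - of_int N" by blast
    from quadK[OF xK this] show ?thesis .
  qed
qed

end


lemma lattice_subgrp:
  assumes "lattice_in K L" shows "subgrp L"
proof -
  obtain w1 w2 where L: "L = {of_int m * w1 + of_int n * w2 | m n :: int. True}"
    using assms unfolding lattice_in_def by blast
  show ?thesis unfolding subgrp_def
  proof (intro conjI ballI)
    have "0 = of_int (0::int) * w1 + of_int (0::int) * w2" by simp
    then show "0 \<in> L" unfolding L by blast
    fix x y assume "x \<in> L" "y \<in> L"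
    then obtain m n m' n' where "x = of_int m * w1 + of_int n * w2" "y = of_int m' * w1 + of_int n' * w2"
      unfolding L by blast
    then have "x - y = of_int (m - m') * w1 + of_int (n - n') * w2" by (simp add: algebra_simps)
    then show "x - y \<in> L" unfolding L by blast
  qed
qed

context fixes d :: int assumes dpos: "d > 0" and sqf: "squarefree d"
begin

abbreviation "Ord m \<equiv> order_of_conductor (imag_quad_field d) m"

lemma Ord_iff: "z \<in> Ord m \<longleftrightarrow> (\<exists>n k :: int. z = of_int n + of_int k * of_nat m * om d)"
proof
  assume "z \<in> Ord m"
  then obtain n x where z: "z = of_int n + of_nat m * x" and x: "x \<in> ring_of_integers (imag_quad_field d)"
    unfolding order_of_conductor_def by blast
  obtain n' k where "x = of_int n' + of_int k * om d" using x OK_iff[OF dpos sqf] by blast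
  then have "z = of_int (n + int m * n') + of_int k * of_nat m * om d" unfolding z by (simp add: algebra_simps)
  then show "\<exists>n k :: int. z = of_int n + of_int k * of_nat m * om d" by blast
next
  assume "\<exists>n k :: int. z = of_int n + of_int k * of_nat m * om d"
  then obtain n k :: int where z: "z = of_int n + of_int k * of_nat m * om d" by blast
  have "of_int 0 + of_int k * om d \<in> ring_of_integers (imag_quad_field d)" using OK_iff[OF dpos sqf] by blast
  moreover have "z = of_int n + of_nat m * (of_int 0 + of_int k * om d)" unfolding z by (simp add: algebra_simps)
  ultimately show "z \<in> Ord m" unfolding order_of_conductor_def by blast
qed

lemma om_coords_unique:
  assumes "of_int n + of_int k * om d = of_int n' + of_int k' * om d"
  shows "n = n' \<and> k = k'"
proof -
  have "Im (of_int n + of_int k * om d) = Im (of_int n' + of_int k' * om d)" using assms by simp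
  then have "k = k'" using Im_om[OF dpos sqf] by simp
  then show ?thesis using assms by simp
qed

lemma Ord_subgrp: "subgrp (Ord m)"
  unfolding subgrp_def
proof (intro conjI ballI)
  have "(0::complex) = of_int 0 + of_int 0 * of_nat m * om d" by simp
  then show "0 \<in> Ord m" unfolding Ord_iff by blast
  fix x y assume "x \<in> Ord m" "y \<in> Ord m"
  then obtain n k n' k' :: int where "x = of_int n + of_int k * of_nat m * om d" "y = of_int n' + of_int k' * of_nat m * om d"
    unfolding Ord_iff by blast
  then have "x - y = of_int (n - n') + of_int (k - k') * of_nat m * om d" by (simp add: algebra_simps)
  then show "x - y \<in> Ord m" unfolding Ord_iff by blast
qed

lemma Ord_mult: "x \<in> Ord m \<Longrightarrow> y \<in> Ord m \<Longrightarrow> x * y \<in> Ord m"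
proof -
  assume "x \<in> Ord m" "y \<in> Ord m"
  then obtain n k n' k' :: int where x: "x = of_int n + of_int k * of_nat m * om d" and y: "y = of_int n' + of_int k' * of_nat m * om d"
    unfolding Ord_iff by blast
  obtain t u where tu: "om d * om d = of_int t * om d + of_int u" using om_sq[OF dpos sqf] by blast
  have "x * y = of_int n * of_int n' + (of_int n * of_int k' + of_int n' * of_int k) * of_nat m * om d
     + of_int k * of_int k' * of_nat m * of_nat m * (om d * om d)" unfolding x y by (simp add: algebra_simps)
  also have "\<dots> = of_int (n * n' + k * k' * int m * int m * u) + of_int (n * k' + n' * k + k * k' * int m * t) * of_nat m * om d"
    unfolding tu by (simp add: algebra_simps)
  finally show ?thesis unfolding Ord_iff by blast
qed

lemma Ord_int: "of_int n \<in> Ord m"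
  unfolding Ord_iff by (intro exI[of _ n] exI[of _ 0]) simp

lemma Ord_dvd: "m dvd f \<Longrightarrow> Ord f \<subseteq> Ord m"
proof
  fix z assume "m dvd f" "z \<in> Ord f"
  then obtain q where q: "f = m * q" by blast
  obtain n k :: int where "z = of_int n + of_int k * of_nat f * om d" using \<open>z \<in> Ord f\<close> unfolding Ord_iff by blast
  then have "z = of_int n + of_int (k * int q) * of_nat m * om d" unfolding q by (simp add: algebra_simps)
  then show "z \<in> Ord m" unfolding Ord_iff by blast
qed

lemma Ord_Lat: "Ord m \<subseteq> Lat d 2"
proof
  fix z assume "z \<in> Ord m"
  then obtain n k :: int where z: "z = of_int n + of_int (k * int m) * om d" unfolding Ord_iff by auto
  have "of_int n = (of_int (2 * n) + of_int 0 * th d) / (of_int 2 :: complex)" by simp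
  then have "of_int n \<in> Lat d 2" unfolding Lat_iff[OF dpos] by blast
  then show "z \<in> Lat d 2" unfolding z
    by (intro subgrp_add[OF Lat_subgrp[OF dpos]] subgrp_intmult[OF Lat_subgrp[OF dpos]] om_Lat2[OF dpos sqf])
qed

lemma order_between:
  assumes f: "f \<ge> 1" and R: "subgrp R" "Ord f \<subseteq> R" "R \<subseteq> ring_of_integers (imag_quad_field d)"
  shows "\<exists>m'. m' \<ge> 1 \<and> m' dvd f \<and> R = Ord m'"
proof -
  define S where "S = {k. \<exists>n. of_int n + of_int k * om d \<in> R}"
  have "subgrp S" unfolding subgrp_def S_def
  proof (intro conjI ballI; simp)
    show "\<exists>n. of_int n \<in> R" using R(2) Ord_int by blast
    fix x y assume "\<exists>n. of_int n + of_int x * om d \<in> R" "\<exists>n. of_int n + of_int y * om d \<in> R"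
    then obtain n n' where "of_int n + of_int x * om d \<in> R" "of_int n' + of_int y * om d \<in> R" by blast
    from subgrp_diff[OF R(1) this]
    have "of_int (n - n') + of_int (x - y) * om d \<in> R" by (simp add: algebra_simps)
    then show "\<exists>n. of_int n + (of_int x - of_int y) * om d \<in> R" by (intro exI[of _ "n - n'"]) simp
  qed
  obtain g where g: "g \<ge> 0" "S = {j * g | j. True}" using int_subgroup[OF \<open>subgrp S\<close>] by blast
  have "of_int 0 + of_int 1 * of_nat f * om d \<in> Ord f" unfolding Ord_iff by blast
  then have "of_int 0 + of_int (int f) * om d \<in> R" using R(2) by auto
  then have "int f \<in> S" unfolding S_def by blast
  then obtain j0 where j0: "int f = j0 * g" using g by auto
  then have "g \<noteq> 0" using f by auto
  define m' where "m' = nat g"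
  have gm: "int m' = g" unfolding m'_def using g by simp
  have "m' \<ge> 1" using \<open>g \<noteq> 0\<close> g unfolding m'_def by simp
  moreover have "m' dvd f"
  proof -
    have "int m' dvd int f" using j0 gm by simp
    then show ?thesis by simp
  qed
  moreover have "R = Ord m'"
  proof (intro set_eqI iffI)
    fix z assume "z \<in> R"
    then obtain n k where z: "z = of_int n + of_int k * om d" using R(3) OK_iff[OF dpos sqf] by blast
    have "k \<in> S" unfolding S_def using \<open>z \<in> R\<close> z by blast
    then obtain j where "k = j * g" using g by auto
    then have "z = of_int n + of_int j * of_nat m' * om d" unfolding z using gm
      by (metis of_int_mult of_int_of_nat_eq mult.assoc)
    then show "z \<in> Ord m'" unfolding Ord_iff by blast
  next
    fix z assume "z \<in> Ord m'"
    then obtain n j :: int where z: "z = of_int n + of_int j * of_nat m' * om d" unfolding Ord_iff by blast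
    have "j * g \<in> S" using g by blast
    then obtain n0 where n0: "of_int n0 + of_int (j * g) * om d \<in> R" unfolding S_def by blast
    have "of_int (n0 - n) \<in> R" using R(2) Ord_int by blast
    from subgrp_diff[OF R(1) n0 this]
    have "of_int n0 + of_int (j * g) * om d - of_int (n0 - n) \<in> R" .
    moreover have "of_int n0 + of_int (j * g) * om d - of_int (n0 - n) = z" unfolding z gm[symmetric]
      by (simp add: algebra_simps)
    ultimately show "z \<in> R" by simp
  qed
  ultimately show ?thesis by blast
qed

end


theorem lemma3p2:
  fixes d :: int and f :: nat and \<aa> :: "complex set" and v :: "complex \<times> complex"
  assumes "d > 0" and "squarefree d"
    and "f \<ge> 1"
    and "lattice_in (imag_quad_field d) \<aa>"
    and "\<exists>m. has_conductor (imag_quad_field d) \<aa> m \<and> m dvd f"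
    and "elliptic_subtorus (prod_lattice (order_of_conductor (imag_quad_field d) f) \<aa>) v"
  shows "\<exists>c :: complex. c \<noteq> 0 \<and>
     lattice_in (imag_quad_field d)
       ((\<lambda>z. c * z) ` line_lattice (prod_lattice (order_of_conductor (imag_quad_field d) f) \<aa>) v) \<and>
     (\<exists>m. has_conductor (imag_quad_field d)
       ((\<lambda>z. c * z) ` line_lattice (prod_lattice (order_of_conductor (imag_quad_field d) f) \<aa>) v) m
       \<and> m dvd f)"
proof -
  note dpos = assms(1) and sqf = assms(2)
  define K where "K = imag_quad_field d"
  define Of where "Of = order_of_conductor K f"
  define LL where "LL = line_lattice (prod_lattice Of \<aa>) v"
  obtain v1 v2 where v: "v = (v1, v2)" by (cases v)
  have LL: "LL = {z. z * v1 \<in> Of \<and> z * v2 \<in> \<aa>}"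
    unfolding LL_def line_lattice_def prod_lattice_def v by simp
  obtain z1 z2 where z: "z1 \<in> LL" "z2 \<in> LL" "Im (z2 * cnj z1) \<noteq> 0" and vnz: "v \<noteq> (0, 0)"
    using assms(6) unfolding elliptic_subtorus_def LL_def Of_def K_def by blast
  obtain m where m: "has_conductor K \<aa> m" "m dvd f" using assms(5) unfolding K_def by blast
  have aK: "lattice_in K \<aa>" using assms(4) unfolding K_def .
  have "\<exists>c :: complex. c \<noteq> 0 \<and> lattice_in K ((\<lambda>z. c * z) ` LL) \<and>
     (\<exists>m. has_conductor K ((\<lambda>z. c * z) ` LL) m \<and> m dvd f)"
  proof (cases "v1 = 0")
    case True
    then have "v2 \<noteq> 0" using vnz v by simp
    have "0 \<in> Of" unfolding Of_def K_def using Ord_int[OF dpos sqf, of 0 f] by simp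
    have "(\<lambda>z. v2 * z) ` LL = \<aa>"
    proof (intro set_eqI iffI)
      fix y assume "y \<in> (\<lambda>z. v2 * z) ` LL"
      then show "y \<in> \<aa>" unfolding LL by (auto simp: mult.commute)
    next
      fix y assume "y \<in> \<aa>"
      then have "y / v2 \<in> LL" unfolding LL using True \<open>0 \<in> Of\<close> \<open>v2 \<noteq> 0\<close> by simp
      moreover have "y = v2 * (y / v2)" using \<open>v2 \<noteq> 0\<close> by simp
      ultimately show "y \<in> (\<lambda>z. v2 * z) ` LL" by blast
    qed
    then show ?thesis using \<open>v2 \<noteq> 0\<close> aK m by (intro exI[of _ v2]) auto
  next
    case False
    define w where "w = v2 / v1"
    define B where "B = (\<lambda>z. v1 * z) ` LL"
    have B: "B = {y. y \<in> Of \<and> y * w \<in> \<aa>}"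
    proof (intro set_eqI iffI)
      fix y assume "y \<in> B"
      then obtain z where "z \<in> LL" "y = v1 * z" unfolding B_def by blast
      then show "y \<in> {y. y \<in> Of \<and> y * w \<in> \<aa>}" unfolding LL w_def using False
        by (simp add: mult.commute)
    next
      fix y assume "y \<in> {y. y \<in> Of \<and> y * w \<in> \<aa>}"
      then have "y / v1 \<in> LL" unfolding LL w_def using False by (simp add: field_simps)
      moreover have "y = v1 * (y / v1)" using False by simp
      ultimately show "y \<in> B" unfolding B_def by blast
    qed
    have asub: "subgrp \<aa>" using lattice_subgrp[OF aK] .
    have Ofsub: "subgrp Of" unfolding Of_def K_def by (rule Ord_subgrp[OF dpos sqf])
    have "subgrp B" unfolding subgrp_def B
    proof (intro conjI ballI; simp)
      show "0 \<in> Of \<and> 0 \<in> \<aa>" using subgrp_0[OF Ofsub] subgrp_0[OF asub] by simp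
      fix x y assume "x \<in> Of \<and> x * w \<in> \<aa>" "y \<in> Of \<and> y * w \<in> \<aa>"
      then show "x - y \<in> Of \<and> (x - y) * w \<in> \<aa>"
        using subgrp_diff[OF Ofsub] subgrp_diff[OF asub] by (simp add: left_diff_distrib)
    qed
    have OfL: "Of \<subseteq> Lat d 2" unfolding Of_def K_def by (rule Ord_Lat[OF dpos sqf])
    have BL: "B \<subseteq> Lat d 2" using OfL unfolding B by auto
    have hB: "v1 * z1 \<in> B" "v1 * z2 \<in> B" unfolding B_def using z by auto
    have "Im ((v1 * z2) * cnj (v1 * z1)) = (norm v1)^2 * Im (z2 * cnj z1)"
    proof -
      have "(v1 * z2) * cnj (v1 * z1) = (v1 * cnj v1) * (z2 * cnj z1)" by (simp add: algebra_simps)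
      also have "\<dots> = of_real ((norm v1)^2) * (z2 * cnj z1)" by (simp only: complex_norm_square)
      finally have eq: "(v1 * z2) * cnj (v1 * z1) = of_real ((norm v1)^2) * (z2 * cnj z1)" .
      have imr: "Im (of_real r * x) = r * Im x" for r x by simp
      show ?thesis unfolding eq imr ..
    qed
    then have Imh: "Im ((v1 * z2) * cnj (v1 * z1)) \<noteq> 0" using z(3) False by simp
    have Blat: "lattice_in K B" unfolding K_def
      by (rule lattice_sub[OF dpos \<open>subgrp B\<close> BL _ hB Imh]) simp
    define R where "R = {\<alpha> \<in> K. \<forall>x\<in>B. \<alpha> * x \<in> B}"
    have "subgrp R" unfolding subgrp_def
    proof (intro conjI ballI)
      show "0 \<in> R" unfolding R_def using K_of_int[OF dpos, of 0] subgrp_0[OF \<open>subgrp B\<close>] unfolding K_def by simp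
      fix x y assume "x \<in> R" "y \<in> R"
      then show "x - y \<in> R" unfolding R_def
        using K_diff[OF dpos] subgrp_diff[OF \<open>subgrp B\<close>] unfolding K_def by (auto simp: left_diff_distrib)
    qed
    have OaK: "{\<alpha> \<in> K. \<forall>x\<in>\<aa>. \<alpha> * x \<in> \<aa>} = order_of_conductor K m" using m(1) unfolding has_conductor_def by blast
    have OfR: "Of \<subseteq> R"
    proof
      fix \<alpha> assume "\<alpha> \<in> Of"
      have "\<alpha> \<in> K" using \<open>\<alpha> \<in> Of\<close> OfL Lat_sub_K[OF dpos, of 2] unfolding K_def by auto
      moreover have "\<alpha> \<in> order_of_conductor K m" using Ord_dvd[OF dpos sqf m(2)] \<open>\<alpha> \<in> Of\<close> unfolding Of_def K_def by blast
      then have am: "\<forall>x\<in>\<aa>. \<alpha> * x \<in> \<aa>" using OaK by blast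
      have "\<forall>x\<in>B. \<alpha> * x \<in> B"
      proof
        fix x assume "x \<in> B"
        then have "x \<in> Of" "x * w \<in> \<aa>" unfolding B by auto
        then have "\<alpha> * x \<in> Of" "\<alpha> * x * w \<in> \<aa>" using Ord_mult[OF dpos sqf] \<open>\<alpha> \<in> Of\<close> am unfolding Of_def K_def
          by (auto simp: mult.assoc)
        then show "\<alpha> * x \<in> B" unfolding B by simp
      qed
      ultimately show "\<alpha> \<in> R" unfolding R_def by blast
    qed
    have ROK: "R \<subseteq> ring_of_integers K"
    proof
      fix \<alpha> assume "\<alpha> \<in> R"
      then have "\<alpha> \<in> K" "\<forall>x\<in>B. \<alpha> * x \<in> B" unfolding R_def by auto
      from CH[OF Blat this(2)] obtain T N where "\<alpha> * \<alpha> = of_int T * \<alpha> - of_int N" by blast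
      from quadK[OF dpos sqf _ this] \<open>\<alpha> \<in> K\<close> obtain n k where "\<alpha> = of_int n + of_int k * om d"
        unfolding K_def by blast
      then show "\<alpha> \<in> ring_of_integers K" using OK_iff[OF dpos sqf] unfolding K_def by blast
    qed
    from order_between[OF dpos sqf assms(3) \<open>subgrp R\<close>] OfR ROK
    obtain m' where "m' \<ge> 1" "m' dvd f" "R = order_of_conductor K m'" unfolding Of_def K_def by blast
    then have "has_conductor K B m'" unfolding has_conductor_def R_def by blast
    then show ?thesis using False Blat \<open>m' dvd f\<close> unfolding B_def by blast
  qed
  then show ?thesis unfolding K_def LL_def Of_def .
qed

end
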